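(* Let $p\geq 1$ and let $\gamma=(1\,2\,\cdots\,p)\in S_p$ be the full cycle $\gamma(i)=i+1 \pmod p$. For every noncrossing partition $\pi\in NC(p)$, identified with its geodesic permutation (defined in the context), one has $$1+\mathrm{e}(\pi)=\#(\pi\gamma),$$ where $\mathrm{e}(\pi)$ is the number of blocks of $\pi$ of even cardinality and $\#(\sigma)$ denotes the number of cycles of a permutation $\sigma$.
   Context: $NC(p)$ denotes the set of noncrossing partitions of $\{1,\dots,p\}$. A noncrossing partition $\pi$ is identified with the permutation of $\{1,\dots,p\}$ whose cycles are the blocks of $\pi$, each block $\{i_1<i_2<\dots<i_k\}$ being the cycle $i_1\mapsto i_2\mapsto\cdots\mapsto i_k\mapsto i_1$ (these are exactly the permutations $\sigma$ with $|\sigma|+|\sigma^{-1}\gamma|=p-1$, where $|\sigma|$ is the minimal number of transpositions needed to write $\sigma$). For a permutation, $\#$ counts cycles; for a partition, $\#$ counts blocks. *)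

theory Defs
  imports Main "HOL-Library.Disjoint_Sets"
begin

definition gamma :: "nat \<Rightarrow> nat \<Rightarrow> nat" where
  "gamma p i = (if 1 \<le> i \<and> i < p then i + 1 else if i = p then 1 else i)"

definition noncrossing :: "nat set set \<Rightarrow> bool" where
  "noncrossing P \<longleftrightarrow> (\<forall>B1\<in>P. \<forall>B2\<in>P. \<forall>a b c d.
      B1 \<noteq> B2 \<and> a < b \<and> b < c \<and> c < d \<and> a \<in> B1 \<and> c \<in> B1 \<and> b \<in> B2 \<and> d \<in> B2 \<longrightarrow> False)"

definition NC :: "nat \<Rightarrow> nat set set set" where
  "NC p = {P. partition_on {1..p} P \<and> noncrossing P}"

text \<open>Permutation associated to a partition: each block {i1<...<ik} becomes the cycle
  i1 -> i2 -> ... -> ik -> i1; points outside the union are fixed.\<close>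
definition perm_of_partition :: "nat set set \<Rightarrow> nat \<Rightarrow> nat" where
  "perm_of_partition P i =
     (if \<exists>B\<in>P. i \<in> B then
        (let B = (THE B. B \<in> P \<and> i \<in> B) in
           if \<exists>j\<in>B. i < j then Min {j\<in>B. i < j} else Min B)
      else i)"

definition num_cycles :: "nat \<Rightarrow> (nat \<Rightarrow> nat) \<Rightarrow> nat" where
  "num_cycles p f = card {{(f ^^ k) i | k. True} | i. i \<in> {1..p}}"

definition even_blocks :: "nat set set \<Rightarrow> nat" where
  "even_blocks P = card {B\<in>P. even (card B)}"

end

theory Submission
  imports Defs
begin

definition orb :: "('a \<Rightarrow> 'a) \<Rightarrow> 'a \<Rightarrow> 'a set" where
  "orb f x = {(f ^^ k) x | k. True}"

definition orbs :: "'a set \<Rightarrow> ('a \<Rightarrow> 'a) \<Rightarrow> 'a set set" where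
  "orbs S f = orb f ` S"

definition splice :: "('a \<Rightarrow> 'a) \<Rightarrow> 'a \<Rightarrow> 'a \<Rightarrow> 'a" where
  "splice f s x = (if f x = s then f s else f x)"

lemma orb_self: "x \<in> orb f x"
  unfolding orb_def by (auto intro: exI[of _ 0])

lemma orb_step: "y \<in> orb f x \<Longrightarrow> f y \<in> orb f x"
proof -
  assume "y \<in> orb f x"
  then obtain k where "y = (f ^^ k) x" unfolding orb_def by blast
  hence "f y = (f ^^ Suc k) x" by simp
  then show ?thesis unfolding orb_def by blast
qed

lemma orb_trans: "y \<in> orb f x \<Longrightarrow> orb f y \<subseteq> orb f x"
proof
  fix z assume "y \<in> orb f x" "z \<in> orb f y"
  then obtain k j where "y = (f ^^ k) x" "z = (f ^^ j) y" unfolding orb_def by blast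
  hence "z = (f ^^ (j + k)) x" by (simp add: funpow_add)
  then show "z \<in> orb f x" unfolding orb_def by blast
qed

lemma funpow_in: "f ` S \<subseteq> S \<Longrightarrow> x \<in> S \<Longrightarrow> (f ^^ k) x \<in> S"
proof (induction k)
  case 0 show ?case using 0(2) by simp
next
  case (Suc k)
  then have "(f ^^ k) x \<in> S" by blast
  then have "f ((f ^^ k) x) \<in> S" using Suc.prems(1) by blast
  then show ?case by simp
qed

lemma orb_sub: assumes "f ` S \<subseteq> S" "x \<in> S" shows "orb f x \<subseteq> S"
proof
  fix y assume "y \<in> orb f x"
  then obtain k where "y = (f ^^ k) x" unfolding orb_def by blast
  then show "y \<in> S" using funpow_in[OF assms] by simp
qed

lemma inj_funpow: "f ` S \<subseteq> S \<Longrightarrow> inj_on f S \<Longrightarrow> inj_on (f ^^ k) S"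
proof (induction k)
  case 0 show ?case by simp
next
  case (Suc k)
  have "(f ^^ k) ` S \<subseteq> S" using funpow_in[OF Suc.prems(1)] by blast
  then have "inj_on f ((f ^^ k) ` S)" using Suc.prems(2) inj_on_subset by blast
  then have "inj_on (f \<circ> (f ^^ k)) S" using Suc.IH[OF Suc.prems] comp_inj_on by blast
  then show ?case by (simp add: comp_def)
qed

lemma periodic:
  assumes fin: "finite S" and maps: "f ` S \<subseteq> S" and inj: "inj_on f S" and x: "x \<in> S"
  shows "\<exists>n>0. (f ^^ n) x = x"
proof -
  define h where "h = (\<lambda>k. (f ^^ k) x)"
  have hS: "range h \<subseteq> S" unfolding h_def using funpow_in[OF maps x] by blast
  have "\<not> inj h"
  proof
    assume "inj h"
    then have "finite (UNIV :: nat set)"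
      using finite_imageD[of h UNIV] finite_subset[OF hS fin] by blast
    then show False by simp
  qed
  then obtain i j where ij: "i \<noteq> j" "h i = h j" unfolding inj_def by blast
  have key: "\<exists>n>0. (f ^^ n) x = x" if "i < j" "h i = h j" for i j
  proof -
    have "(f ^^ i) ((f ^^ (j - i)) x) = (f ^^ (i + (j - i))) x"
      by (simp only: funpow_add comp_apply)
    also have "i + (j - i) = j" using that(1) by simp
    finally have "(f ^^ i) ((f ^^ (j - i)) x) = (f ^^ i) x"
      using that(2) unfolding h_def by simp
    moreover have "(f ^^ (j - i)) x \<in> S" using funpow_in[OF maps x] .
    ultimately have "(f ^^ (j - i)) x = x"
      using inj_onD[OF inj_funpow[OF maps inj, of i]] x by blast
    then show ?thesis using that(1) by (intro exI[of _ "j - i"]) simp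
  qed
  show ?thesis
  proof (cases "i < j")
    case True then show ?thesis using key ij by blast
  next
    case False then have "j < i" using ij by simp
    then show ?thesis using key ij by metis
  qed
qed

lemma funpow_mult_fix: "(f ^^ n) x = x \<Longrightarrow> (f ^^ (m * n)) x = x"
proof (induction m)
  case 0 show ?case by simp
next
  case (Suc m)
  have "(f ^^ (Suc m * n)) x = (f ^^ (n + m * n)) x" by simp
  also have "\<dots> = (f ^^ n) ((f ^^ (m * n)) x)" by (simp only: funpow_add comp_apply)
  also have "\<dots> = x" using Suc by simp
  finally show ?case .
qed

lemma orb_sym:
  assumes "finite S" "f ` S \<subseteq> S" "inj_on f S" "x \<in> S" "y \<in> orb f x"
  shows "x \<in> orb f y"
proof -
  obtain n where n: "n > 0" "(f ^^ n) x = x" using periodic[OF assms(1-4)] by blast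
  obtain k where k: "y = (f ^^ k) x" using assms(5) unfolding orb_def by blast
  have le: "k \<le> k * n" using n(1) by simp
  have "(f ^^ (k * n - k)) y = (f ^^ (k * n - k + k)) x"
    unfolding k by (simp only: funpow_add comp_apply)
  also have "k * n - k + k = k * n" using le by simp
  also have "(f ^^ (k * n)) x = x" using funpow_mult_fix[OF n(2)] .
  finally have "x = (f ^^ (k * n - k)) y" by simp
  then show ?thesis unfolding orb_def by blast
qed

lemma orb_eq:
  assumes "finite S" "f ` S \<subseteq> S" "inj_on f S" "x \<in> S" "y \<in> orb f x"
  shows "orb f y = orb f x"
proof (rule equalityI)
  show "orb f y \<subseteq> orb f x" using orb_trans[OF assms(5)] .
  show "orb f x \<subseteq> orb f y" using orb_trans[OF orb_sym[OF assms]] .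
qed


context
  fixes S :: "'a set" and f :: "'a \<Rightarrow> 'a" and s :: 'a
  assumes fin: "finite S" and maps: "f ` S \<subseteq> S" and inj: "inj_on f S" and sS: "s \<in> S"
begin

lemma mapsD: "x \<in> S \<Longrightarrow> f x \<in> S"
  using maps by blast

lemma injD: "x \<in> S \<Longrightarrow> y \<in> S \<Longrightarrow> f x = f y \<Longrightarrow> x = y"
  by (rule inj_onD[OF inj])

lemma splice_in: assumes x: "x \<in> S" "x \<noteq> s" shows "splice f s x \<in> S - {s}"
proof (cases "f x = s")
  case True
  then have e: "splice f s x = f s" unfolding splice_def by simp
  have "f s \<noteq> s"
  proof
    assume "f s = s"
    then have "f x = f s" using True by simp
    then have "x = s" using injD[OF x(1) sS] by simp
    then show False using x(2) by simp
  qed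
  then show ?thesis using e mapsD[OF sS] by simp
next
  case False
  then have e: "splice f s x = f x" unfolding splice_def by simp
  then show ?thesis using False mapsD[OF x(1)] by simp
qed

lemma splice_maps: "splice f s ` (S - {s}) \<subseteq> S - {s}"
proof (rule image_subsetI)
  fix x assume "x \<in> S - {s}"
  then have "x \<in> S" "x \<noteq> s" by simp_all
  then show "splice f s x \<in> S - {s}" by (rule splice_in)
qed

lemma splice_inj: "inj_on (splice f s) (S - {s})"
proof (rule inj_onI)
  fix x y assume xS: "x \<in> S - {s}" and yS: "y \<in> S - {s}" and e: "splice f s x = splice f s y"
  have x: "x \<in> S" "x \<noteq> s" using xS by auto
  have y: "y \<in> S" "y \<noteq> s" using yS by auto
  show "x = y"
  proof (cases "f x = s")
    case fx: True
    show ?thesis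
    proof (cases "f y = s")
      case True then show ?thesis using fx injD[OF x(1) y(1)] by simp
    next
      case False
      then have "f s = f y" using e fx unfolding splice_def by simp
      then have "s = y" using injD[OF sS y(1)] by simp
      then show ?thesis using y by simp
    qed
  next
    case fx: False
    show ?thesis
    proof (cases "f y = s")
      case True
      then have "f x = f s" using e fx unfolding splice_def by simp
      then have "x = s" using injD[OF x(1) sS] by simp
      then show ?thesis using x by simp
    next
      case False
      then have "f x = f y" using e fx unfolding splice_def by simp
      then show ?thesis using injD[OF x(1) y(1)] by simp
    qed
  qed
qed

lemma orbI: "y = (f ^^ k) x \<Longrightarrow> y \<in> orb f x"
  unfolding orb_def by blast

lemma orbE: "y \<in> orb f x \<Longrightarrow> (\<And>k. y = (f ^^ k) x \<Longrightarrow> P) \<Longrightarrow> P"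
  unfolding orb_def by blast

lemma splice_orb_sub:
  assumes x: "x \<in> S - {s}"
  shows "orb (splice f s) x \<subseteq> orb f x - {s}"
proof -
  have *: "(splice f s ^^ k) x \<in> orb f x" for k
  proof (induction k)
    case 0 show ?case using orb_self[of x f] by simp
  next
    case (Suc k)
    define y where "y = (splice f s ^^ k) x"
    have yo: "y \<in> orb f x" using Suc unfolding y_def .
    have "splice f s y \<in> orb f x"
    proof (cases "f y = s")
      case True
      then have "splice f s y = f (f y)" by (simp add: splice_def)
      then show ?thesis using orb_step[OF orb_step[OF yo]] by simp
    next
      case False
      then show ?thesis using orb_step[OF yo] by (simp add: splice_def)
    qed
    then show ?case unfolding y_def by simp
  qed
  have **: "(splice f s ^^ k) x \<in> S - {s}" for k
    using funpow_in[OF splice_maps x] .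
  show ?thesis
  proof
    fix z assume "z \<in> orb (splice f s) x"
    then obtain k where "z = (splice f s ^^ k) x" unfolding orb_def by blast
    then show "z \<in> orb f x - {s}" using *[of k] **[of k] by simp
  qed
qed

lemma splice_orb_sup:
  assumes xx: "x \<in> S - {s}"
  shows "orb f x - {s} \<subseteq> orb (splice f s) x"
proof -
  let ?g = "splice f s"
  have x: "x \<in> S" "x \<noteq> s" using xx by simp_all
  have nfix: "(f ^^ k) x \<noteq> s" if fs: "f s = s" for k
  proof
    assume k: "(f ^^ k) x = s"
    have "(f ^^ k) s = s" using fs by (induction k) simp_all
    then have "(f ^^ k) x = (f ^^ k) s" using k by simp
    then have "x = s" using inj_onD[OF inj_funpow[OF maps inj, of k]] x(1) sS by simp
    then show False using x(2) by simp
  qed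
  have main: "(f ^^ k) x \<in> orb ?g x \<or> ((f ^^ k) x = s \<and> (f ^^ Suc k) x \<in> orb ?g x)" for k
  proof (induction k)
    case 0 show ?case using orb_self[of x ?g] by simp
  next
    case (Suc k)
    define z where "z = (f ^^ k) x"
    have IH: "z \<in> orb ?g x \<or> (z = s \<and> f z \<in> orb ?g x)" using Suc unfolding z_def by simp
    have goal: "f z \<in> orb ?g x \<or> (f z = s \<and> f (f z) \<in> orb ?g x)"
    proof (cases "z \<in> orb ?g x")
      case a: True
      have zs: "z \<noteq> s" using a orb_sub[OF splice_maps xx] by auto
      show ?thesis
      proof (cases "f z = s")
        case True
        then have "?g z = f (f z)" by (simp add: splice_def)
        then have "f (f z) \<in> orb ?g x" using orb_step[OF a] by simp
        then show ?thesis using True by simp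
      next
        case False
        then have "?g z = f z" by (simp add: splice_def)
        then show ?thesis using orb_step[OF a] by simp
      qed
    next
      case False
      from IH False have "f z \<in> orb ?g x" by (elim disjE conjE) simp_all
      then show ?thesis by (rule disjI1)
    qed
    then show ?case unfolding z_def by simp
  qed
  show ?thesis
  proof
    fix y assume "y \<in> orb f x - {s}"
    then have y: "y \<in> orb f x" "y \<noteq> s" by simp_all
    then obtain k where k: "y = (f ^^ k) x" unfolding orb_def by blast
    then show "y \<in> orb ?g x" using main[of k] y(2) by auto
  qed
qed

lemma splice_orb: "x \<in> S - {s} \<Longrightarrow> orb (splice f s) x = orb f x - {s}"
  using splice_orb_sub splice_orb_sup by (rule equalityI)

lemma orb_fix: "f s = s \<Longrightarrow> orb f s = {s}"
proof -
  assume fs: "f s = s"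
  have "(f ^^ k) s = s" for k using fs by (induction k) simp_all
  then show ?thesis unfolding orb_def by auto
qed

lemma orbs_splice: "orbs (S - {s}) (splice f s) = (\<lambda>Q. Q - {s}) ` (orbs S f - {{s}})"
proof (rule equalityI)
  show "orbs (S - {s}) (splice f s) \<subseteq> (\<lambda>Q. Q - {s}) ` (orbs S f - {{s}})"
  proof
    fix Q assume "Q \<in> orbs (S - {s}) (splice f s)"
    then obtain x where x: "x \<in> S - {s}" "Q = orb (splice f s) x" unfolding orbs_def by auto
    have e: "Q = orb f x - {s}" using splice_orb[OF x(1)] x(2) by simp
    have "orb f x \<noteq> {s}" using orb_self[of x f] x(1) by auto
    moreover have "orb f x \<in> orbs S f" using x(1) unfolding orbs_def by simp
    ultimately show "Q \<in> (\<lambda>Q. Q - {s}) ` (orbs S f - {{s}})" using e by simp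
  qed
next
  show "(\<lambda>Q. Q - {s}) ` (orbs S f - {{s}}) \<subseteq> orbs (S - {s}) (splice f s)"
  proof
    fix Q' assume "Q' \<in> (\<lambda>Q. Q - {s}) ` (orbs S f - {{s}})"
    then obtain Q where Q: "Q \<in> orbs S f" "Q \<noteq> {s}" "Q' = Q - {s}" by auto
    then obtain x where x: "x \<in> S" "Q = orb f x" unfolding orbs_def by auto
    show "Q' \<in> orbs (S - {s}) (splice f s)"
    proof (cases "x = s")
      case False
      then have "x \<in> S - {s}" using x by simp
      then have "Q' = orb (splice f s) x" using splice_orb[of x] Q x by simp
      then show ?thesis using \<open>x \<in> S - {s}\<close> unfolding orbs_def by simp
    next
      case True
      have fs: "f s \<noteq> s" using orb_fix Q(2) x True by auto
      have fsS: "f s \<in> S - {s}" using fs mapsD[OF sS] by simp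
      have "orb f (f s) = orb f s"
        using orb_eq[OF fin maps inj sS orb_step[OF orb_self[of s f]]] .
      then have "Q' = orb (splice f s) (f s)" using splice_orb[OF fsS] Q x True by simp
      then show ?thesis using fsS unfolding orbs_def by simp
    qed
  qed
qed

lemma orbs_splice_inj: "inj_on (\<lambda>Q. Q - {s}) (orbs S f - {{s}})"
proof (rule inj_onI)
  fix Q1 Q2 assume Q1: "Q1 \<in> orbs S f - {{s}}" and Q2: "Q2 \<in> orbs S f - {{s}}"
    and e: "Q1 - {s} = Q2 - {s}"
  obtain x1 where x1: "x1 \<in> S" "Q1 = orb f x1" using Q1 unfolding orbs_def by auto
  obtain x2 where x2: "x2 \<in> S" "Q2 = orb f x2" using Q2 unfolding orbs_def by auto
  have "Q1 \<noteq> {}" using x1 orb_self[of x1 f] by auto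
  moreover have "Q1 \<noteq> {s}" using Q1 by simp
  ultimately obtain y where y: "y \<in> Q1" "y \<noteq> s" by auto
  have y2: "y \<in> Q2" using y e by auto
  have "orb f y = Q1" using orb_eq[OF fin maps inj x1(1)] y(1) x1(2) by simp
  moreover have "orb f y = Q2" using orb_eq[OF fin maps inj x2(1)] y2 x2(2) by simp
  ultimately show "Q1 = Q2" by simp
qed

lemma card_orbs_splice:
  "card (orbs (S - {s}) (splice f s)) + (if f s = s then 1 else 0) = card (orbs S f)"
proof -
  have finO: "finite (orbs S f)" unfolding orbs_def using fin by simp
  have c1: "card (orbs (S - {s}) (splice f s)) = card (orbs S f - {{s}})"
    unfolding orbs_splice using card_image[OF orbs_splice_inj] .
  have iff: "{s} \<in> orbs S f \<longleftrightarrow> f s = s"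
  proof
    assume "{s} \<in> orbs S f"
    then obtain x where x: "x \<in> S" "{s} = orb f x" unfolding orbs_def by auto
    then have "x = s" using orb_self[of x f] by auto
    then have "f s \<in> {s}" using x orb_step[OF orb_self[of s f]] by simp
    then show "f s = s" by simp
  next
    assume "f s = s"
    then show "{s} \<in> orbs S f" using orb_fix sS unfolding orbs_def by (metis image_eqI)
  qed
  show ?thesis
  proof (cases "f s = s")
    case True
    then have "{s} \<in> orbs S f" using iff by simp
    then have "card (orbs S f - {{s}}) = card (orbs S f) - 1"
      by (rule card_Diff_singleton)
    moreover have "card (orbs S f) > 0" using finO \<open>{s} \<in> orbs S f\<close> card_gt_0_iff by auto
    ultimately have "card (orbs S f - {{s}}) + 1 = card (orbs S f)" by simp
    then show ?thesis using c1 True by simp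
  next
    case False
    then have "{s} \<notin> orbs S f" using iff by simp
    then show ?thesis using c1 False by simp
  qed
qed

end

lemma orb_fixpt: "f s = s \<Longrightarrow> orb f s = {s}"
proof -
  assume fs: "f s = s"
  have "(f ^^ k) s = s" for k using fs by (induction k) simp_all
  then show ?thesis unfolding orb_def by auto
qed

lemma orbs_cong:
  assumes maps: "f ` S \<subseteq> S" and eq: "\<And>x. x \<in> S \<Longrightarrow> f x = g x"
  shows "orbs S f = orbs S g"
proof -
  have *: "(f ^^ k) x = (g ^^ k) x" if x: "x \<in> S" for x k
  proof (induction k)
    case 0 show ?case by simp
  next
    case (Suc k)
    have "(f ^^ k) x \<in> S" using funpow_in[OF maps x] .
    then have "f ((f ^^ k) x) = g ((f ^^ k) x)" by (rule eq)
    then show ?case using Suc by simp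
  qed
  have "orb f x = orb g x" if "x \<in> S" for x
    unfolding orb_def using *[OF that] by simp
  then show ?thesis unfolding orbs_def by simp
qed

definition nextc :: "nat set \<Rightarrow> nat \<Rightarrow> nat" where
  "nextc S i = (if \<exists>j\<in>S. i < j then Min {j\<in>S. i < j} else Min S)"

definition nxt :: "nat set \<Rightarrow> nat \<Rightarrow> nat \<Rightarrow> bool" where
  "nxt S x y \<longleftrightarrow> y \<in> S \<and> ((x < y \<and> (\<forall>z\<in>S. x < z \<longrightarrow> y \<le> z)) \<or> ((\<forall>z\<in>S. z \<le> x) \<and> (\<forall>z\<in>S. y \<le> z)))"

lemma nextc_char:
  assumes "finite S" "nxt S x y"
  shows "nextc S x = y"
proof (cases "\<exists>j\<in>S. x < j")
  case True
  then have e: "nextc S x = Min {j\<in>S. x < j}" unfolding nextc_def by simp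
  have "x < y \<and> (\<forall>z\<in>S. x < z \<longrightarrow> y \<le> z)" using assms(2) True unfolding nxt_def by force
  then have "Min {j\<in>S. x < j} = y" using assms unfolding nxt_def by (intro Min_eqI) auto
  then show ?thesis using e by simp
next
  case False
  then have e: "nextc S x = Min S" unfolding nextc_def by simp
  have "\<forall>z\<in>S. y \<le> z" using assms(2) False unfolding nxt_def by force
  then have "Min S = y" using assms unfolding nxt_def by (intro Min_eqI) auto
  then show ?thesis using e by simp
qed

lemma nextc_nxt:
  assumes "finite S" "S \<noteq> {}"
  shows "nxt S x (nextc S x)"
proof (cases "\<exists>j\<in>S. x < j")
  case True
  then have e: "nextc S x = Min {j\<in>S. x < j}" unfolding nextc_def by simp
  have fin: "finite {j\<in>S. x < j}" "{j\<in>S. x < j} \<noteq> {}" using assms True by auto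
  have "Min {j\<in>S. x < j} \<in> {j\<in>S. x < j}" using Min_in[OF fin] .
  moreover have "\<forall>z\<in>S. x < z \<longrightarrow> Min {j\<in>S. x < j} \<le> z" using Min_le[OF fin(1)] by simp
  ultimately show ?thesis unfolding nxt_def e by simp
next
  case False
  then have e: "nextc S x = Min S" unfolding nextc_def by simp
  have "Min S \<in> S" using Min_in assms by simp
  moreover have "\<forall>z\<in>S. Min S \<le> z" using Min_le assms(1) by simp
  ultimately show ?thesis unfolding nxt_def e using False by auto
qed

lemma nextc_in: "finite S \<Longrightarrow> S \<noteq> {} \<Longrightarrow> nextc S x \<in> S"
  using nextc_nxt unfolding nxt_def by blast

lemma nxt_unique: "nxt S x y \<Longrightarrow> nxt S x y' \<Longrightarrow> y = y'"
  unfolding nxt_def by (meson antisym not_le order_less_le_trans)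

lemma nextc_maps: "finite S \<Longrightarrow> S \<noteq> {} \<Longrightarrow> nextc S ` S \<subseteq> S"
  using nextc_in by blast

lemma nxt_lt_contra:
  assumes "x < y" "x \<in> S" "y \<in> S" "nxt S x z" "nxt S y z"
  shows False
proof -
  have "\<not> (\<forall>w\<in>S. w \<le> x)" using assms(1,3) leD by blast
  then have a: "x < z" "z \<le> y" using assms(4,3,1) unfolding nxt_def by auto
  from assms(5) have "(y < z \<and> (\<forall>w\<in>S. y < w \<longrightarrow> z \<le> w)) \<or> ((\<forall>w\<in>S. w \<le> y) \<and> (\<forall>w\<in>S. z \<le> w))"
    unfolding nxt_def by simp
  then show False
  proof
    assume "y < z \<and> (\<forall>w\<in>S. y < w \<longrightarrow> z \<le> w)"
    then show False using a by simp
  next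
    assume "(\<forall>w\<in>S. w \<le> y) \<and> (\<forall>w\<in>S. z \<le> w)"
    then have "z \<le> x" using assms(2) by simp
    then show False using a by simp
  qed
qed

lemma nextc_inj:
  assumes fin: "finite S"
  shows "inj_on (nextc S) S"
proof (rule inj_onI)
  fix x y assume x: "x \<in> S" and y: "y \<in> S" and e: "nextc S x = nextc S y"
  have ne: "S \<noteq> {}" using x by auto
  have nx: "nxt S x (nextc S x)" and ny: "nxt S y (nextc S x)" using nextc_nxt[OF fin ne] e by metis+
  show "x = y"
  proof (rule ccontr)
    assume "x \<noteq> y"
    then consider "x < y" | "y < x" by linarith
    then show False
    proof cases
      case 1
      show False using nxt_lt_contra[OF 1 x y nx ny] .
    next
      case 2
      show False using nxt_lt_contra[OF 2 y x ny nx] .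
    qed
  qed
qed

lemma nextc_splice:
  assumes fin: "finite S" and s: "s \<in> S" and x: "x \<in> S" and xs: "x \<noteq> s"
  shows "nextc (S - {s}) x = splice (nextc S) s x"
proof -
  have ne: "S \<noteq> {}" using s by auto
  have nx: "nxt S x (nextc S x)" and ns: "nxt S s (nextc S s)" using nextc_nxt[OF fin ne] by auto
  have fin': "finite (S - {s})" using fin by simp
  show ?thesis
  proof (cases "nextc S x = s")
    case True
    then have e: "splice (nextc S) s x = nextc S s" unfolding splice_def by simp
    have "nxt (S - {s}) x (nextc S s)"
    proof -
      have a: "nxt S x s" using nx True by simp
      have nss: "nextc S s \<noteq> s"
      proof
        assume "nextc S s = s"
        then have "nextc S s = nextc S x" using True by simp
        then show False using inj_onD[OF nextc_inj[OF fin] _ s x] xs by simp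
      qed
      define t where "t = nextc S s"
      have tS: "t \<in> S - {s}" using ns nss unfolding nxt_def t_def by simp
      have A: "(x < s \<and> (\<forall>z\<in>S. x < z \<longrightarrow> s \<le> z)) \<or> ((\<forall>z\<in>S. z \<le> x) \<and> (\<forall>z\<in>S. s \<le> z))"
        using a unfolding nxt_def by simp
      have C: "(s < t \<and> (\<forall>z\<in>S. s < z \<longrightarrow> t \<le> z)) \<or> ((\<forall>z\<in>S. z \<le> s) \<and> (\<forall>z\<in>S. t \<le> z))"
        using ns unfolding nxt_def t_def by simp
      have "(x < t \<and> (\<forall>z\<in>S - {s}. x < z \<longrightarrow> t \<le> z)) \<or> ((\<forall>z\<in>S - {s}. z \<le> x) \<and> (\<forall>z\<in>S - {s}. t \<le> z))"
      proof (rule disjE[OF A]; rule disjE[OF C])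
        assume a1: "x < s \<and> (\<forall>z\<in>S. x < z \<longrightarrow> s \<le> z)" and c1: "s < t \<and> (\<forall>z\<in>S. s < z \<longrightarrow> t \<le> z)"
        have "\<forall>z\<in>S - {s}. x < z \<longrightarrow> t \<le> z"
        proof (intro ballI impI)
          fix z assume "z \<in> S - {s}" "x < z"
          then have "s < z" using a1 by force
          then show "t \<le> z" using c1 \<open>z \<in> S - {s}\<close> by simp
        qed
        then show ?thesis using a1 c1 by simp
      next
        assume a1: "x < s \<and> (\<forall>z\<in>S. x < z \<longrightarrow> s \<le> z)" and c2: "(\<forall>z\<in>S. z \<le> s) \<and> (\<forall>z\<in>S. t \<le> z)"
        have "\<forall>z\<in>S - {s}. z \<le> x"
        proof
          fix z assume z: "z \<in> S - {s}"
          then have "z < s" using c2 by force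
          then show "z \<le> x" using a1 z by force
        qed
        then show ?thesis using c2 by simp
      next
        assume a2: "(\<forall>z\<in>S. z \<le> x) \<and> (\<forall>z\<in>S. s \<le> z)" and c1: "s < t \<and> (\<forall>z\<in>S. s < z \<longrightarrow> t \<le> z)"
        have "\<forall>z\<in>S - {s}. t \<le> z"
        proof
          fix z assume z: "z \<in> S - {s}"
          then have "s < z" using a2 by force
          then show "t \<le> z" using c1 z by simp
        qed
        then show ?thesis using a2 by simp
      next
        assume a2: "(\<forall>z\<in>S. z \<le> x) \<and> (\<forall>z\<in>S. s \<le> z)" and c2: "(\<forall>z\<in>S. z \<le> s) \<and> (\<forall>z\<in>S. t \<le> z)"
        have "x \<le> s" "s \<le> x" using a2 c2 x s by auto
        then show ?thesis using xs by simp
      qed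
      then show ?thesis using tS unfolding nxt_def t_def by simp
    qed
    then show ?thesis using nextc_char[OF fin'] e by simp
  next
    case False
    then have e: "splice (nextc S) s x = nextc S x" unfolding splice_def by simp
    have "nxt (S - {s}) x (nextc S x)" using nx False unfolding nxt_def by auto
    then show ?thesis using nextc_char[OF fin'] e by simp
  qed
qed

lemma ss_comp:
  fixes p g :: "'a \<Rightarrow> 'a"
  assumes ip: "\<And>u v. u \<in> S \<Longrightarrow> v \<in> S \<Longrightarrow> p u = p v \<Longrightarrow> u = v"
    and ig: "\<And>u v. u \<in> S \<Longrightarrow> v \<in> S \<Longrightarrow> g u = g v \<Longrightarrow> u = v"
    and mp: "\<And>u. u \<in> S \<Longrightarrow> p u \<in> S" and mg: "\<And>u. u \<in> S \<Longrightarrow> g u \<in> S"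
    and ab: "a \<in> S" "b \<in> S" "a \<noteq> b" "g a = b" "p a = b"
    and x: "x \<in> S" "x \<noteq> a" "x \<noteq> b"
  shows "splice (splice p a) b (splice (splice g a) b x) = splice (splice (p \<circ> g) a) b x"
proof -
  have gxb: "g x \<noteq> b" using ig[OF x(1) ab(1)] ab x by auto
  have gbb: "g b \<noteq> b" using ig[OF ab(2) ab(1)] ab by auto
  have pbb: "p b \<noteq> b" using ip[OF ab(2) ab(1)] ab by auto
  define y where "y = (if g x = a then g b else g x)"
  have gba: "g x = a \<Longrightarrow> g b \<noteq> a" using ig[OF x(1) ab(2)] x by auto
  have yS: "y \<in> S" "y \<noteq> a" "y \<noteq> b" unfolding y_def using mg ab x gxb gbb gba by auto
  have L1: "splice (splice g a) b x = y" unfolding y_def splice_def using gxb gba ab by auto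
  have pyb: "p y \<noteq> b" using ip[OF yS(1) ab(1)] yS ab by auto
  have pya: "p y = a \<Longrightarrow> p b \<noteq> a" using ip[OF yS(1) ab(2)] yS by auto
  have L2: "splice (splice p a) b y = (if p y = a then p b else p y)"
    unfolding splice_def using pyb pya ab pbb by auto
  have R: "splice (splice (p \<circ> g) a) b x = (if p y = a then p b else p y)"
  proof (cases "g x = a")
    case True
    then have yy: "y = g b" unfolding y_def by simp
    have hx: "(p \<circ> g) x = b" using True ab by simp
    have s1: "splice (p \<circ> g) a x = b" unfolding splice_def using hx ab(3) by simp
    have s2: "splice (p \<circ> g) a b = (if p y = a then p b else p y)"
      unfolding splice_def using yy ab by simp
    show ?thesis unfolding splice_def[of "splice (p \<circ> g) a"] using s1 s2 by simp
  next
    case False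
    then have yy: "y = g x" unfolding y_def by simp
    have s1: "splice (p \<circ> g) a x = (if p y = a then p b else p y)"
      unfolding splice_def using yy ab by simp
    have "(if p y = a then p b else p y) \<noteq> b" using pbb pyb by simp
    then show ?thesis unfolding splice_def[of "splice (p \<circ> g) a"] using s1 by simp
  qed
  show ?thesis using L1 L2 R by simp
qed

lemma s_comp:
  fixes p g :: "'a \<Rightarrow> 'a"
  assumes ip: "\<And>u v. u \<in> S \<Longrightarrow> v \<in> S \<Longrightarrow> p u = p v \<Longrightarrow> u = v"
    and ig: "\<And>u v. u \<in> S \<Longrightarrow> v \<in> S \<Longrightarrow> g u = g v \<Longrightarrow> u = v"
    and mg: "\<And>u. u \<in> S \<Longrightarrow> g u \<in> S"
    and s: "s \<in> S" "p s = s" and x: "x \<in> S" "x \<noteq> s"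
  shows "p (splice g s x) = splice (p \<circ> g) s x"
proof (cases "g x = s")
  case True
  have "g s \<noteq> s" using ig[OF x(1) s(1)] True x(2) by auto
  then have "p (g s) \<noteq> s" using ip[OF mg[OF s(1)] s(1)] s(2) by auto
  then show ?thesis using True s(2) unfolding splice_def by simp
next
  case False
  then have "p (g x) \<noteq> s" using ip[OF mg[OF x(1)] s(1)] s(2) by auto
  then show ?thesis using False unfolding splice_def by simp
qed

section \<open>Partitions\<close>

lemma part_cover: "partition_on S P \<Longrightarrow> x \<in> S \<Longrightarrow> \<exists>B\<in>P. x \<in> B"
  unfolding partition_on_def by blast

lemma part_sub: "partition_on S P \<Longrightarrow> B \<in> P \<Longrightarrow> B \<subseteq> S"
  unfolding partition_on_def by blast

lemma part_ne: "partition_on S P \<Longrightarrow> B \<in> P \<Longrightarrow> B \<noteq> {}"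
  unfolding partition_on_def by blast

lemma part_uniq: "partition_on S P \<Longrightarrow> B \<in> P \<Longrightarrow> C \<in> P \<Longrightarrow> x \<in> B \<Longrightarrow> x \<in> C \<Longrightarrow> B = C"
  unfolding partition_on_def disjoint_def disjnt_def by blast

lemma perm_block:
  assumes P: "partition_on S P" and B: "B \<in> P" and i: "i \<in> B"
  shows "perm_of_partition P i = nextc B i"
proof -
  have the: "(THE C. C \<in> P \<and> i \<in> C) = B"
  proof (rule the_equality)
    show "B \<in> P \<and> i \<in> B" using B i by simp
    fix C assume "C \<in> P \<and> i \<in> C"
    then show "C = B" using part_uniq[OF P _ B] i by blast
  qed
  have ex: "\<exists>C\<in>P. i \<in> C" using B i by blast
  show ?thesis unfolding perm_of_partition_def nextc_def Let_def the using ex by simp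
qed

lemma perm_maps_inj:
  assumes fin: "finite S" and P: "partition_on S P"
  shows "perm_of_partition P ` S \<subseteq> S" "inj_on (perm_of_partition P) S"
proof -
  have inB: "perm_of_partition P x \<in> B" if "B \<in> P" "x \<in> B" for x B
  proof -
    have "finite B" using part_sub[OF P that(1)] fin finite_subset by blast
    moreover have "B \<noteq> {}" using that(2) by blast
    ultimately show ?thesis using perm_block[OF P that] nextc_in by simp
  qed
  show "perm_of_partition P ` S \<subseteq> S"
  proof (rule image_subsetI)
    fix x assume "x \<in> S"
    then obtain B where B: "B \<in> P" "x \<in> B" using part_cover[OF P] by blast
    then show "perm_of_partition P x \<in> S" using inB part_sub[OF P] by blast
  qed
  show "inj_on (perm_of_partition P) S"
  proof (rule inj_onI)
    fix x y assume x: "x \<in> S" and y: "y \<in> S" and e: "perm_of_partition P x = perm_of_partition P y"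
    obtain B where B: "B \<in> P" "x \<in> B" using part_cover[OF P x] by blast
    obtain C where C: "C \<in> P" "y \<in> C" using part_cover[OF P y] by blast
    have "perm_of_partition P x \<in> B" using inB[OF B] .
    moreover have "perm_of_partition P x \<in> C" using inB[OF C] e by simp
    ultimately have BC: "B = C" using part_uniq[OF P B(1) C(1)] by simp
    have "finite B" using part_sub[OF P B(1)] fin finite_subset by blast
    have "nextc B x = nextc B y" using e perm_block[OF P B] perm_block[OF P C] BC by simp
    then show "x = y" using inj_onD[OF nextc_inj[OF \<open>finite B\<close>]] B C BC by simp
  qed
qed

lemma part_remove_single:
  assumes P: "partition_on S P" and s: "{s} \<in> P"
  shows "partition_on (S - {s}) (P - {{s}})"
proof -
  have U: "\<Union>P = S" "disjoint P" "{} \<notin> P" using P unfolding partition_on_def by auto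
  have "\<Union>(P - {{s}}) = S - {s}"
  proof
    show "\<Union>(P - {{s}}) \<subseteq> S - {s}"
    proof
      fix x assume "x \<in> \<Union>(P - {{s}})"
      then obtain B where B: "B \<in> P" "B \<noteq> {s}" "x \<in> B" by blast
      have "x \<noteq> s"
      proof
        assume "x = s"
        then have "B = {s}" using part_uniq[OF P B(1) s] B(3) by simp
        then show False using B(2) by simp
      qed
      then show "x \<in> S - {s}" using B U(1) by blast
    qed
    show "S - {s} \<subseteq> \<Union>(P - {{s}})" using U(1) by blast
  qed
  moreover have "disjoint (P - {{s}})" using U(2) by (rule pairwise_subset) blast
  moreover have "{} \<notin> P - {{s}}" using U(3) by blast
  ultimately show ?thesis unfolding partition_on_def by blast
qed

lemma part_remove_block:
  assumes P: "partition_on S P" and B: "B \<in> P"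
  shows "partition_on (S - B) (P - {B})"
proof -
  have U: "\<Union>P = S" "disjoint P" "{} \<notin> P" using P unfolding partition_on_def by auto
  have "\<Union>(P - {B}) = S - B"
  proof
    show "\<Union>(P - {B}) \<subseteq> S - B"
    proof
      fix x assume "x \<in> \<Union>(P - {B})"
      then obtain C where C: "C \<in> P" "C \<noteq> B" "x \<in> C" by blast
      have "x \<notin> B" using part_uniq[OF P B C(1)] C by blast
      then show "x \<in> S - B" using C U(1) by blast
    qed
    show "S - B \<subseteq> \<Union>(P - {B})" using U(1) by blast
  qed
  moreover have "disjoint (P - {B})" using U(2) by (rule pairwise_subset) blast
  moreover have "{} \<notin> P - {B}" using U(3) by blast
  ultimately show ?thesis unfolding partition_on_def by blast
qed

lemma part_shrink:
  assumes P: "partition_on S P" and B: "B \<in> P" and ne: "B - {a} - {b} \<noteq> {}"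
    and a: "a \<in> B" and b: "b \<in> B"
  shows "partition_on (S - {a} - {b}) (insert (B - {a} - {b}) (P - {B}))"
proof -
  have P': "partition_on (S - B) (P - {B})" using part_remove_block[OF P B] .
  have d: "disjnt (B - {a} - {b}) (\<Union>(P - {B}))"
    using P' part_sub[OF P' ] unfolding partition_on_def disjnt_def by blast
  have e: "S - {a} - {b} - (B - {a} - {b}) = S - B" using a b by blast
  show ?thesis unfolding partition_on_insert[OF d] e
    using P' ne part_sub[OF P B] by blast
qed

lemma nc_subset: "noncrossing P \<Longrightarrow> Q \<subseteq> P \<Longrightarrow> noncrossing Q"
  unfolding noncrossing_def by blast

lemma nc_shrink:
  assumes nc: "noncrossing P" and P: "partition_on S P" and B: "B \<in> P" and ne: "B - {a} - {b} \<noteq> {}"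
  shows "noncrossing (insert (B - {a} - {b}) (P - {B}))"
proof -
  define B' where "B' = B - {a} - {b}"
  define h where "h C = (if C = B' then B else C)" for C
  have sub: "C \<subseteq> h C" for C unfolding h_def B'_def by auto
  have hP: "h C \<in> P" if "C \<in> insert B' (P - {B})" for C using that B unfolding h_def by auto
  have hinj: "h C1 \<noteq> h C2" if "C1 \<in> insert B' (P - {B})" "C2 \<in> insert B' (P - {B})" "C1 \<noteq> C2" for C1 C2
  proof
    assume e: "h C1 = h C2"
    have notB': "C \<noteq> B'" if "C \<in> P - {B}" for C
    proof
      assume "C = B'"
      then obtain x where "x \<in> C" "x \<in> B" using ne unfolding B'_def by blast
      then show False using part_uniq[OF P _ B] that by blast
    qed
    show False
    proof (cases "C1 = B'")
      case True
      then have "C2 \<noteq> B'" using that(3) by simp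
      then have "C2 \<in> P - {B}" "h C2 = C2" using that(2) unfolding h_def by auto
      then show False using e True unfolding h_def by simp
    next
      case False
      then have c1: "C1 \<in> P - {B}" "h C1 = C1" using that(1) unfolding h_def by auto
      show False
      proof (cases "C2 = B'")
        case True
        then show False using e c1 unfolding h_def by simp
      next
        case False
        then have "h C2 = C2" unfolding h_def by simp
        then show False using e c1 that(3) by simp
      qed
    qed
  qed
  show ?thesis unfolding noncrossing_def B'_def[symmetric]
  proof (intro ballI allI impI)
    fix B1 B2 a' b' c d
    assume B1: "B1 \<in> insert B' (P - {B})" and B2: "B2 \<in> insert B' (P - {B})"
      and H: "B1 \<noteq> B2 \<and> a' < b' \<and> b' < c \<and> c < d \<and> a' \<in> B1 \<and> c \<in> B1 \<and> b' \<in> B2 \<and> d \<in> B2"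
    have "h B1 \<noteq> h B2" using hinj[OF B1 B2] H by simp
    moreover have "a' \<in> h B1" "c \<in> h B1" "b' \<in> h B2" "d \<in> h B2" using sub H by blast+
    ultimately show False using nc hP[OF B1] hP[OF B2] H unfolding noncrossing_def by blast
  qed
qed


lemma eb_single: "{s} \<in> P \<Longrightarrow> even_blocks (P - {{s}}) = even_blocks P"
proof -
  assume "{s} \<in> P"
  have "{C \<in> P - {{s}}. even (card C)} = {C \<in> P. even (card C)}" by auto
  then show ?thesis unfolding even_blocks_def by simp
qed

lemma eb_pair:
  assumes fin: "finite P" and B: "B \<in> P" and c: "card B = 2"
  shows "even_blocks (P - {B}) + 1 = even_blocks P"
proof -
  have e: "{C \<in> P - {B}. even (card C)} = {C \<in> P. even (card C)} - {B}" by auto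
  have "B \<in> {C \<in> P. even (card C)}" using B c by simp
  moreover have "finite {C \<in> P. even (card C)}" using fin by simp
  ultimately have "card ({C \<in> P. even (card C)} - {B}) + 1 = card {C \<in> P. even (card C)}"
    by (metis card_Suc_Diff1 Suc_eq_plus1)
  then show ?thesis unfolding even_blocks_def e .
qed

lemma eb_shrink:
  assumes fin: "finite P" and B: "B \<in> P" and finB: "finite B" and a: "a \<in> B" and b: "b \<in> B"
    and ab: "a \<noteq> b" and nB: "B - {a} - {b} \<notin> P - {B}"
  shows "even_blocks (insert (B - {a} - {b}) (P - {B})) = even_blocks P"
proof -
  define X where "X = {C \<in> P - {B}. even (card C)}"
  have finX: "finite X" unfolding X_def using fin by simp
  have cB: "card (B - {a} - {b}) + 2 = card B"
  proof -
    have "Suc (card (B - {a})) = card B" using card_Suc_Diff1[OF finB a] .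
    moreover have "Suc (card (B - {a} - {b})) = card (B - {a})"
      using card_Suc_Diff1[of "B - {a}" b] finB b ab by simp
    ultimately show ?thesis by simp
  qed
  have par: "even (card (B - {a} - {b})) = even (card B)" using cB[symmetric] by simp
  have notX: "B - {a} - {b} \<notin> X" "B \<notin> X" using nB unfolding X_def by auto
  have e1: "{C \<in> insert (B - {a} - {b}) (P - {B}). even (card C)} =
      (if even (card B) then insert (B - {a} - {b}) X else X)"
    unfolding X_def using par by auto
  have e2: "{C \<in> P. even (card C)} = (if even (card B) then insert B X else X)"
    unfolding X_def using B by auto
  show ?thesis unfolding even_blocks_def e1 e2 using finX notX by simp
qed

lemma adjacent:
  assumes fin: "finite S" and P: "partition_on S P" and nc: "noncrossing P"
    and nos: "\<And>s. {s} \<notin> P" and ne: "S \<noteq> {}"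
  shows "\<exists>B a b. B \<in> P \<and> a \<in> B \<and> b \<in> B \<and> a < b \<and> nextc S a = b"
proof -
  have two: "\<exists>y\<in>C. y \<noteq> x" if "C \<in> P" "x \<in> C" for C x
  proof (rule ccontr)
    assume "\<not> ?thesis"
    then have "C = {x}" using that(2) by blast
    then show False using nos that(1) by simp
  qed
  have step: "\<forall>a b B. B \<in> P \<and> a \<in> B \<and> b \<in> B \<and> a < b \<and> b - a = d \<longrightarrow>
      (\<exists>B a b. B \<in> P \<and> a \<in> B \<and> b \<in> B \<and> a < b \<and> nextc S a = b)" for d
  proof (induction d rule: less_induct)
    case (less d)
    show ?case
    proof (intro allI impI)
      fix a b B assume H: "B \<in> P \<and> a \<in> B \<and> b \<in> B \<and> a < b \<and> b - a = d"
      have aS: "a \<in> S" and bS: "b \<in> S" using H part_sub[OF P] by blast+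
      show "\<exists>B a b. B \<in> P \<and> a \<in> B \<and> b \<in> B \<and> a < b \<and> nextc S a = b"
      proof (cases "\<exists>z\<in>S. a < z \<and> z < b")
        case False
        have "nxt S a b" unfolding nxt_def using bS H False by (auto simp: not_less)
        then have "nextc S a = b" using nextc_char[OF fin] by simp
        then show ?thesis using H by blast
      next
        case True
        then obtain z where z: "z \<in> S" "a < z" "z < b" by blast
        obtain C where C: "C \<in> P" "z \<in> C" using part_cover[OF P z(1)] by blast
        show ?thesis
        proof (cases "C = B")
          case True
          have dd: "d = b - a" using H by simp
          have lt: "z - a < d" unfolding dd using z by presburger
          have "B \<in> P \<and> a \<in> B \<and> z \<in> B \<and> a < z \<and> z - a = z - a" using H z C True by simp
          then show ?thesis using less.IH[OF lt] by blast
        next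
          case False
          obtain w where w: "w \<in> C" "w \<noteq> z" using two[OF C] by blast
          have wa: "w \<noteq> a" "w \<noteq> b" using part_uniq[OF P C(1) _ w(1)] H False by blast+
          consider "w < a" | "a < w \<and> w < b" | "b < w" using wa by linarith
          then show ?thesis
          proof cases
            case 1
            then show ?thesis using nc H C w z False unfolding noncrossing_def by blast
          next
            case 2
            show ?thesis
            proof (cases "w < z")
              case True
              have dd: "d = b - a" using H by simp
              have lt: "z - w < d" unfolding dd using z 2 by presburger
              have "C \<in> P \<and> w \<in> C \<and> z \<in> C \<and> w < z \<and> z - w = z - w" using C w True by simp
              then show ?thesis using less.IH[OF lt] by blast
            next
              case False
              then have "z < w" using w(2) by simp
              have dd: "d = b - a" using H by simp
              have lt: "w - z < d" unfolding dd using z 2 by presburger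
              have "C \<in> P \<and> z \<in> C \<and> w \<in> C \<and> z < w \<and> w - z = w - z" using C w \<open>z < w\<close> by simp
              then show ?thesis using less.IH[OF lt] by blast
            qed
          next
            case 3
            then show ?thesis using nc H C w z False unfolding noncrossing_def by blast
          qed
        qed
      qed
    qed
  qed
  obtain x where x: "x \<in> S" using ne by blast
  obtain B where B: "B \<in> P" "x \<in> B" using part_cover[OF P x] by blast
  obtain y where y: "y \<in> B" "y \<noteq> x" using two[OF B] by blast
  show ?thesis
  proof (cases "x < y")
    case True then show ?thesis using step[of "y - x"] B y by blast
  next
    case False then have "y < x" using y by simp
    then show ?thesis using step[of "x - y"] B y by blast
  qed
qed

lemma nextc_nxt': "finite S \<Longrightarrow> x \<in> S \<Longrightarrow> nxt S x (nextc S x)"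
  using nextc_nxt by blast

lemma nxt_fwd: "nxt S a b \<Longrightarrow> a < b \<Longrightarrow> z \<in> S \<Longrightarrow> a < z \<Longrightarrow> b \<le> z"
  unfolding nxt_def by auto

lemma wrap2:
  assumes fin: "finite S" and ab: "a < b" and a: "a \<in> S" and b: "b \<in> S"
    and e1: "nextc S a = b" and e2: "nextc S b = a"
  shows "S \<subseteq> {a, b}"
proof
  fix z assume z: "z \<in> S"
  have n1: "nxt S a b" using nextc_nxt'[OF fin a] e1 by simp
  have n2: "nxt S b a" using nextc_nxt'[OF fin b] e2 by simp
  have h2: "(\<forall>w\<in>S. w \<le> b) \<and> (\<forall>w\<in>S. a \<le> w)" using n2 ab unfolding nxt_def by auto
  have "z \<le> b" "a \<le> z" using h2 z by auto
  moreover have "a < z \<Longrightarrow> b \<le> z" using nxt_fwd[OF n1 ab z] .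
  ultimately show "z \<in> {a, b}" by (cases "a < z") auto
qed

lemma nextc_splice2:
  assumes fin: "finite S" and a: "a \<in> S" and b: "b \<in> S" and ab: "a \<noteq> b"
    and x: "x \<in> S" "x \<noteq> a" "x \<noteq> b"
  shows "nextc (S - {a} - {b}) x = splice (splice (nextc S) a) b x"
proof -
  have fin': "finite (S - {a})" using fin by simp
  have "nextc (S - {a} - {b}) x = splice (nextc (S - {a})) b x"
    using nextc_splice[OF fin', of b x] b ab x by simp
  also have "\<dots> = splice (splice (nextc S) a) b x"
    unfolding splice_def[of "nextc (S - {a})"] splice_def[of "splice (nextc S) a"]
    using nextc_splice[OF fin a b] nextc_splice[OF fin a x(1)] ab x by simp
  finally show ?thesis .
qed

lemma ss_cong: "f y = g y \<Longrightarrow> f a = g a \<Longrightarrow> f b = g b \<Longrightarrow>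
    splice (splice f a) b y = splice (splice g a) b y"
  unfolding splice_def by simp

lemma ss_other: "f y \<noteq> a \<Longrightarrow> f y \<noteq> b \<Longrightarrow> splice (splice f a) b y = f y"
  unfolding splice_def by simp

lemma finite_partition: "finite S \<Longrightarrow> partition_on S P \<Longrightarrow> finite P"
proof -
  assume "finite S" "partition_on S P"
  then have "P \<subseteq> Pow S" using part_sub by blast
  then show "finite P" using \<open>finite S\<close> finite_subset by blast
qed

lemma main:
  assumes "finite S" "S \<noteq> {}" "partition_on S P" "noncrossing P"
  shows "card (orbs S (perm_of_partition P \<circ> nextc S)) = 1 + even_blocks P"
  using assms
proof (induction "card S" arbitrary: S P rule: less_induct)
  case less
  note fin = less.prems(1) and ne = less.prems(2) and P = less.prems(3) and nc = less.prems(4)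
  define p where "p = perm_of_partition P"
  define g where "g = nextc S"
  define f where "f = p \<circ> g"
  have pm: "p ` S \<subseteq> S" "inj_on p S" using perm_maps_inj[OF fin P] unfolding p_def by auto
  have gm: "g ` S \<subseteq> S" "inj_on g S" using nextc_maps[OF fin ne] nextc_inj[OF fin] unfolding g_def by auto
  have pS: "\<And>u. u \<in> S \<Longrightarrow> p u \<in> S" using pm(1) by blast
  have gS: "\<And>u. u \<in> S \<Longrightarrow> g u \<in> S" using gm(1) by blast
  have pI: "\<And>u v. u \<in> S \<Longrightarrow> v \<in> S \<Longrightarrow> p u = p v \<Longrightarrow> u = v" by (rule inj_onD[OF pm(2)])
  have gI: "\<And>u v. u \<in> S \<Longrightarrow> v \<in> S \<Longrightarrow> g u = g v \<Longrightarrow> u = v" by (rule inj_onD[OF gm(2)])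
  have fS: "\<And>u. u \<in> S \<Longrightarrow> f u \<in> S" unfolding f_def comp_def using pS gS by simp
  have fm: "f ` S \<subseteq> S" using fS by (rule image_subsetI)
  have fi: "inj_on f S" unfolding f_def
    using comp_inj_on[OF gm(2) inj_on_subset[OF pm(2) gm(1)]] .
  have finP: "finite P" using finite_partition[OF fin P] .
  have c1: "card S \<ge> 1" using card_gt_0_iff[of S] fin ne by simp
  have goal_eq: "orbs S (perm_of_partition P \<circ> nextc S) = orbs S f" unfolding f_def p_def g_def ..
  consider (one) "card S = 1" | (sing) "card S \<ge> 2" "\<exists>s. {s} \<in> P" | (nosing) "card S \<ge> 2" "\<forall>s. {s} \<notin> P"
  proof -
    assume h1: "card S = 1 \<Longrightarrow> thesis" and h2: "2 \<le> card S \<Longrightarrow> \<exists>s. {s} \<in> P \<Longrightarrow> thesis"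
      and h3: "2 \<le> card S \<Longrightarrow> \<forall>s. {s} \<notin> P \<Longrightarrow> thesis"
    show thesis
    proof (cases "card S = 1")
      case True then show thesis by (rule h1)
    next
      case False
      then have c2: "2 \<le> card S" using c1 by simp
      show thesis
      proof (cases "\<exists>s. {s} \<in> P")
        case True then show thesis by (rule h2[OF c2])
      next
        case False then show thesis using h3[OF c2] by simp
      qed
    qed
  qed
  then show ?case
  proof cases
    case one
    then obtain x where Sx: "S = {x}" using card_1_singletonE by blast
    have PB: "P = {{x}}"
    proof
      show "P \<subseteq> {{x}}"
      proof
        fix B assume "B \<in> P"
        then have "B \<subseteq> {x}" "B \<noteq> {}" using part_sub[OF P] part_ne[OF P] Sx by auto
        then show "B \<in> {{x}}" by auto
      qed
      show "{{x}} \<subseteq> P" using part_cover[OF P, of x] Sx \<open>P \<subseteq> {{x}}\<close> by auto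
    qed
    have fx: "f x = x" using fm Sx by auto
    have "orbs S f = {{x}}" unfolding orbs_def Sx using orb_fixpt[of f x, OF fx] by simp
    moreover have "even_blocks P = 0" unfolding even_blocks_def PB by simp
    ultimately show ?thesis using goal_eq by simp
  next
    case sing
    then obtain s where s: "{s} \<in> P" by blast
    have sS: "s \<in> S" using part_sub[OF P s] by simp
    define S' where "S' = S - {s}"
    define P' where "P' = P - {{s}}"
    have fin': "finite S'" using fin unfolding S'_def by simp
    have ne': "S' \<noteq> {}"
    proof
      assume "S' = {}"
      then have "S \<subseteq> {s}" unfolding S'_def by blast
      then have "card S \<le> card {s}" by (rule card_mono[rotated]) simp
      then have "card S \<le> 1" by simp
      then show False using sing(1) by simp
    qed
    have P': "partition_on S' P'" unfolding S'_def P'_def using part_remove_single[OF P s] .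
    have nc': "noncrossing P'" unfolding P'_def using nc_subset[OF nc] by blast
    have lt: "card S' < card S" unfolding S'_def using card_Diff1_less[OF fin sS] .
    have IH: "card (orbs S' (perm_of_partition P' \<circ> nextc S')) = 1 + even_blocks P'"
      using less.hyps[OF lt fin' ne' P' nc'] .
    have ps: "p s = s" unfolding p_def using perm_block[OF P s] nextc_in[of "{s}"] by simp
    have gs: "g s \<noteq> s"
    proof
      assume "g s = s"
      then have n: "nxt S s s" using nextc_nxt'[OF fin sS] unfolding g_def by simp
      have "S \<subseteq> {s}"
      proof
        fix z assume "z \<in> S"
        then have "z \<le> s" "s \<le> z" using n unfolding nxt_def by auto
        then show "z \<in> {s}" by simp
      qed
      then have "card S \<le> card {s}" by (rule card_mono[rotated]) simp
      then have "card S \<le> 1" by simp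
      then show False using sing(1) by simp
    qed
    have fs: "f s \<noteq> s"
    proof
      assume "f s = s"
      then have "p (g s) = p s" using ps unfolding f_def by simp
      then show False using pI[OF gS[OF sS] sS] gs by simp
    qed
    have eqf: "(perm_of_partition P' \<circ> nextc S') x = splice f s x" if x: "x \<in> S'" for x
    proof -
      have xS: "x \<in> S" "x \<noteq> s" using x unfolding S'_def by auto
      have n: "nextc S' x = splice g s x" unfolding S'_def g_def using nextc_splice[OF fin sS xS] .
      define y where "y = nextc S' x"
      have yS: "y \<in> S'" unfolding y_def using nextc_in[OF fin' ne'] .
      obtain C where C: "C \<in> P'" "y \<in> C" using part_cover[OF P' yS] by blast
      have CP: "C \<in> P" using C unfolding P'_def by simp
      have e0: "(perm_of_partition P' \<circ> nextc S') x = perm_of_partition P' y" unfolding y_def by simp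
      have e1: "perm_of_partition P' y = nextc C y" using perm_block[OF P' C] .
      have e2: "nextc C y = p y" unfolding p_def using perm_block[OF P CP C(2)] by simp
      have e3: "p y = p (splice g s x)" unfolding y_def n ..
      have e4: "p (splice g s x) = splice f s x" unfolding f_def
        using s_comp[where S=S and p=p and g=g and s=s and x=x, OF pI gI gS sS ps xS] .
      show ?thesis using e0 e1 e2 e3 e4 by simp
    qed
    have maps': "(perm_of_partition P' \<circ> nextc S') ` S' \<subseteq> S'"
    proof (rule image_subsetI)
      fix x assume "x \<in> S'"
      have "nextc S' x \<in> S'" using nextc_in[OF fin' ne'] .
      then have "perm_of_partition P' (nextc S' x) \<in> S'" using perm_maps_inj(1)[OF fin' P'] by blast
      then show "(perm_of_partition P' \<circ> nextc S') x \<in> S'" by simp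
    qed
    have "orbs S' (perm_of_partition P' \<circ> nextc S') = orbs S' (splice f s)"
      using orbs_cong[OF maps' eqf] .
    moreover have "card (orbs S' (splice f s)) = card (orbs S f)"
      using card_orbs_splice[OF fin fm fi sS] fs unfolding S'_def by simp
    moreover have "even_blocks P' = even_blocks P" unfolding P'_def using eb_single[OF s] .
    ultimately show ?thesis using IH goal_eq by simp
  next
    case nosing
    have nos: "\<And>s. {s} \<notin> P" using nosing(2) by simp
    obtain B a b where B: "B \<in> P" "a \<in> B" "b \<in> B" "a < b" "nextc S a = b"
      using adjacent[OF fin P nc nos ne] by blast
    have BS: "B \<subseteq> S" using part_sub[OF P B(1)] .
    have aS: "a \<in> S" and bS: "b \<in> S" using BS B by auto
    have ab: "a \<noteq> b" using B(4) by simp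
    have finB: "finite B" using finite_subset[OF BS fin] .
    have ga: "g a = b" unfolding g_def using B(5) .
    have pB: "\<And>y. y \<in> B \<Longrightarrow> p y = nextc B y" unfolding p_def using perm_block[OF P B(1)] .
    have pa: "p a = b"
    proof -
      have n: "nxt S a b" using nextc_nxt'[OF fin aS] B(5) by simp
      have "\<forall>z\<in>B. a < z \<longrightarrow> b \<le> z" using nxt_fwd[OF n B(4)] BS by blast
      then have "nxt B a b" unfolding nxt_def using B(3,4) by simp
      then have "nextc B a = b" using nextc_char[OF finB] by simp
      then show ?thesis using pB[OF B(2)] by simp
    qed
    have fa_eq: "f a = p b" unfolding f_def using ga by simp
    show ?thesis
    proof (cases "card S = 2")
      case True
      have abS: "{a, b} \<subseteq> S" using aS bS by simp
      have Sab: "S = {a, b}"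
        using card_subset_eq[OF fin abS] True ab by simp
      have BSe: "B = S" using BS B(2,3) Sab by blast
      have nba: "nxt S b a" unfolding nxt_def Sab using B(4) by auto
      have gb: "g b = a" unfolding g_def using nextc_char[OF fin nba] .
      have pb: "p b = a" using pB[OF B(3)] nextc_char[OF fin nba] BSe by simp
      have fa: "f a = a" using fa_eq pb by simp
      have fb: "f b = b" unfolding f_def using gb pa by simp
      have "orbs S f = {{a}, {b}}" unfolding orbs_def Sab using orb_fixpt[of f a, OF fa] orb_fixpt[of f b, OF fb] by simp
      then have co: "card (orbs S f) = 2" using ab by simp
      have PB: "P = {B}"
      proof
        show "P \<subseteq> {B}"
        proof
          fix C assume C: "C \<in> P"
          obtain x where x: "x \<in> C" using part_ne[OF P C] by blast
          have "x \<in> B" using part_sub[OF P C] x BSe by blast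
          then have "C = B" using part_uniq[OF P C B(1) x] by simp
          then show "C \<in> {B}" by simp
        qed
        show "{B} \<subseteq> P" using B(1) by simp
      qed
      have "{C \<in> {B}. even (card C)} = {B}" using True BSe by auto
      then have "even_blocks P = 1" unfolding even_blocks_def PB by simp
      then show ?thesis using co goal_eq by simp
    next
      case False
      then have c3: "card S \<ge> 3" using nosing(1) by simp
      define S'' where "S'' = S - {a} - {b}"
      have fin'': "finite S''" unfolding S''_def using fin by simp
      have ne'': "S'' \<noteq> {}"
      proof
        assume "S'' = {}"
        then have "S \<subseteq> {a, b}" unfolding S''_def by blast
        then have "card S \<le> card {a, b}" by (rule card_mono[rotated]) simp
        also have "\<dots> \<le> 2" by (simp add: card_insert_if)
        finally show False using c3 by simp
      qed
      have lt: "card S'' < card S"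
      proof -
        have "S'' \<subset> S" unfolding S''_def using aS by blast
        then show ?thesis using psubset_card_mono[OF fin] by blast
      qed
      have gb: "g b \<noteq> a"
      proof
        assume "g b = a"
        then have "S \<subseteq> {a, b}" using wrap2[OF fin B(4) aS bS B(5)] unfolding g_def by simp
        then have "card S \<le> card {a, b}" by (rule card_mono[rotated]) simp
        also have "\<dots> \<le> 2" by (simp add: card_insert_if)
        finally show False using c3 by simp
      qed
      have fb_ne: "f b \<noteq> b"
      proof
        assume "f b = b"
        then have "p (g b) = p a" using pa unfolding f_def by simp
        then show False using pI[OF gS[OF bS] aS] gb by simp
      qed
      have C1: "card (orbs (S - {a}) (splice f a)) + (if f a = a then 1 else 0) = card (orbs S f)"
        using card_orbs_splice[OF fin fm fi aS] .
      have g1m: "splice f a ` (S - {a}) \<subseteq> S - {a}" using splice_maps[OF fin fm fi aS] .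
      have g1i: "inj_on (splice f a) (S - {a})" using splice_inj[OF fin fm fi aS] .
      have bS': "b \<in> S - {a}" using bS ab by simp
      have C2: "card (orbs S'' (splice (splice f a) b)) + (if splice f a b = b then 1 else 0)
          = card (orbs (S - {a}) (splice f a))"
        unfolding S''_def using card_orbs_splice[OF _ g1m g1i bS'] fin by simp
      have red: "card (orbs S'' (splice (splice f a) b)) = 1 + even_blocks Q"
        if Q: "partition_on S'' Q" and ncQ: "noncrossing Q"
          and peq: "\<And>y. y \<in> S'' \<Longrightarrow> perm_of_partition Q y = splice (splice p a) b y" for Q
      proof -
        have IH: "card (orbs S'' (perm_of_partition Q \<circ> nextc S'')) = 1 + even_blocks Q"
          using less.hyps[OF lt fin'' ne'' Q ncQ] .
        have feq: "(perm_of_partition Q \<circ> nextc S'') x = splice (splice f a) b x" if x: "x \<in> S''" for x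
        proof -
          have xS: "x \<in> S" "x \<noteq> a" "x \<noteq> b" using x unfolding S''_def by auto
          have n: "nextc S'' x = splice (splice g a) b x"
            unfolding S''_def g_def using nextc_splice2[OF fin aS bS ab xS] .
          have inS: "nextc S'' x \<in> S''" using nextc_in[OF fin'' ne''] .
          have "(perm_of_partition Q \<circ> nextc S'') x = perm_of_partition Q (nextc S'' x)" by simp
          also have "\<dots> = splice (splice p a) b (nextc S'' x)" using peq[OF inS] .
          also have "\<dots> = splice (splice p a) b (splice (splice g a) b x)" unfolding n ..
          also have "\<dots> = splice (splice f a) b x" unfolding f_def
            using ss_comp[where S=S and p=p and g=g and a=a and b=b and x=x, OF pI gI pS gS aS bS ab ga pa xS] .
          finally show ?thesis .
        qed
        have mapsQ: "(perm_of_partition Q \<circ> nextc S'') ` S'' \<subseteq> S''"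
        proof (rule image_subsetI)
          fix x assume "x \<in> S''"
          have "nextc S'' x \<in> S''" using nextc_in[OF fin'' ne''] .
          then have "perm_of_partition Q (nextc S'' x) \<in> S''" using perm_maps_inj(1)[OF fin'' Q] by blast
          then show "(perm_of_partition Q \<circ> nextc S'') x \<in> S''" by simp
        qed
        have "orbs S'' (perm_of_partition Q \<circ> nextc S'') = orbs S'' (splice (splice f a) b)"
          using orbs_cong[OF mapsQ feq] .
        then show ?thesis using IH by simp
      qed
      have other: "perm_of_partition Q y = splice (splice p a) b y"
        if Q: "partition_on S'' Q" and CQ: "C \<in> Q" and CP: "C \<in> P" and CB: "C \<noteq> B" and yC: "y \<in> C" for Q C y
      proof -
        have "perm_of_partition Q y = nextc C y" using perm_block[OF Q CQ yC] .
        also have "\<dots> = p y" unfolding p_def using perm_block[OF P CP yC] by simp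
        finally have e: "perm_of_partition Q y = p y" .
        have finC: "finite C" using finite_subset[OF part_sub[OF P CP] fin] .
        have Cne: "C \<noteq> {}" using yC by blast
        have "nextc C y \<in> C" using nextc_in[OF finC Cne] .
        then have "p y \<in> C" using e perm_block[OF Q CQ yC] by simp
        then have "p y \<noteq> a" "p y \<noteq> b" using part_uniq[OF P CP B(1)] B(2,3) CB by auto
        then show ?thesis using e ss_other by metis
      qed
      show ?thesis
      proof (cases "card B = 2")
        case True
        have Bab: "B = {a, b}"
        proof -
          have abB: "{a, b} \<subseteq> B" using B(2,3) by simp
          show ?thesis using card_subset_eq[OF finB abB] True ab by simp
        qed
        define Q where "Q = P - {B}"
        have SB: "S - B = S''" unfolding S''_def Bab by blast
        have Q: "partition_on S'' Q" unfolding Q_def using part_remove_block[OF P B(1)] SB by simp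
        have ncQ: "noncrossing Q" unfolding Q_def using nc_subset[OF nc] by blast
        have peq: "perm_of_partition Q y = splice (splice p a) b y" if y: "y \<in> S''" for y
        proof -
          have yS: "y \<in> S" using y unfolding S''_def by simp
          obtain C where C: "C \<in> P" "y \<in> C" using part_cover[OF P yS] by blast
          have CB: "C \<noteq> B" using C y Bab unfolding S''_def by auto
          have CQ: "C \<in> Q" unfolding Q_def using C CB by simp
          show ?thesis using other[OF Q CQ C(1) CB C(2)] .
        qed
        have R: "card (orbs S'' (splice (splice f a) b)) = 1 + even_blocks Q" using red[OF Q ncQ peq] .
        have nba: "nxt B b a" unfolding nxt_def Bab using B(4) by auto
        have pb: "p b = a" using pB[OF B(3)] nextc_char[OF finB nba] by simp
        have fa: "f a = a" using fa_eq pb by simp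
        have fba: "f b \<noteq> a"
        proof
          assume "f b = a"
          then have "f b = f a" using fa by simp
          then show False using inj_onD[OF fi _ bS aS] ab by simp
        qed
        have "splice f a b = f b" unfolding splice_def using fba by simp
        then have g1b: "splice f a b \<noteq> b" using fb_ne by simp
        have E: "even_blocks Q + 1 = even_blocks P" unfolding Q_def using eb_pair[OF finP B(1) True] .
        show ?thesis using C1 C2 R E fa g1b goal_eq by simp
      next
        case False
        have ne': "B - {a} - {b} \<noteq> {}"
        proof
          assume "B - {a} - {b} = {}"
          then have "B = {a, b}" using B(2,3) by blast
          then show False using False ab by simp
        qed
        define B'' where "B'' = B - {a} - {b}"
        define Q where "Q = insert B'' (P - {B})"
        have Q: "partition_on S'' Q" unfolding Q_def B''_def S''_def using part_shrink[OF P B(1) ne' B(2) B(3)] .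
        have ncQ: "noncrossing Q" unfolding Q_def B''_def using nc_shrink[OF nc P B(1) ne'] .
        have peq: "perm_of_partition Q y = splice (splice p a) b y" if y: "y \<in> S''" for y
        proof -
          have yS: "y \<in> S" using y unfolding S''_def by simp
          obtain C where C: "C \<in> P" "y \<in> C" using part_cover[OF P yS] by blast
          show ?thesis
          proof (cases "C = B")
            case True
            have yB'': "y \<in> B''" using C True y unfolding B''_def S''_def by simp
            have B''Q: "B'' \<in> Q" unfolding Q_def by simp
            have yB: "y \<in> B" "y \<noteq> a" "y \<noteq> b" using yB'' unfolding B''_def by auto
            have "perm_of_partition Q y = nextc B'' y" using perm_block[OF Q B''Q yB''] .
            also have "\<dots> = splice (splice (nextc B) a) b y"
              unfolding B''_def using nextc_splice2[OF finB B(2) B(3) ab yB] .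
            also have "\<dots> = splice (splice p a) b y"
              using ss_cong[of "nextc B" y p a b] pB[OF yB(1)] pB[OF B(2)] pB[OF B(3)] by simp
            finally show ?thesis .
          next
            case False
            have CQ: "C \<in> Q" unfolding Q_def using C False by simp
            show ?thesis using other[OF Q CQ C(1) False C(2)] .
          qed
        qed
        have R: "card (orbs S'' (splice (splice f a) b)) = 1 + even_blocks Q" using red[OF Q ncQ peq] .
        have fa: "f a \<noteq> a"
        proof
          assume "f a = a"
          then have pb: "p b = a" using fa_eq by simp
          have "nextc B b = a" using pb pB[OF B(3)] by simp
          moreover have "nextc B a = b" using pa pB[OF B(2)] by simp
          ultimately have "B \<subseteq> {a, b}" using wrap2[OF finB B(4) B(2) B(3)] by simp
          then have "card B \<le> card {a, b}" by (rule card_mono[rotated]) simp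
          also have "\<dots> = 2" using ab by simp
          finally have "card B \<le> 2" .
          moreover have "card {a, b} \<le> card B" using card_mono[OF finB] B(2,3) by simp
          ultimately show False using False ab by simp
        qed
        have g1b: "splice f a b \<noteq> b"
        proof (cases "f b = a")
          case True
          then have e: "splice f a b = p b" unfolding splice_def using fa_eq by simp
          have "p b \<noteq> b"
          proof
            assume "p b = b"
            then have "p b = p a" using pa by simp
            then show False using pI[OF bS aS] ab by simp
          qed
          then show ?thesis using e by simp
        next
          case False
          then show ?thesis unfolding splice_def using fb_ne by simp
        qed
        have nB: "B'' \<notin> P - {B}"
        proof
          assume "B'' \<in> P - {B}"
          moreover obtain y where "y \<in> B''" using ne' unfolding B''_def by blast
          ultimately show False using part_uniq[OF P _ B(1)] unfolding B''_def by blast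
        qed
        have E: "even_blocks Q = even_blocks P" unfolding Q_def B''_def
          using eb_shrink[OF finP B(1) finB B(2) B(3) ab] nB unfolding B''_def by simp
        show ?thesis using C1 C2 R E fa g1b goal_eq by simp
      qed
    qed
  qed
qed

lemma gamma_nextc:
  assumes x: "x \<in> {1..p}"
  shows "gamma p x = nextc {1..p} x"
proof (cases "x < p")
  case True
  have "nxt {1..p} x (x + 1)" unfolding nxt_def using True x by auto
  then show ?thesis using nextc_char[of "{1..p}"] True x unfolding gamma_def by simp
next
  case False
  then have xp: "x = p" using x by simp
  have "nxt {1..p} x 1" unfolding nxt_def using xp x by auto
  then show ?thesis using nextc_char[of "{1..p}"] xp x unfolding gamma_def by simp
qed

theorem lemma1p1:
  fixes p :: nat and P :: "nat set set"
  assumes "p \<ge> 1" and "P \<in> NC p"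
  shows "1 + even_blocks P = num_cycles p (perm_of_partition P \<circ> gamma p)"
proof -
  define S where "S = {1..p}"
  have fin: "finite S" and ne: "S \<noteq> {}" unfolding S_def using assms(1) by auto
  have P: "partition_on S P" and nc: "noncrossing P" using assms(2) unfolding NC_def S_def by auto
  have nc_eq: "num_cycles p f = card (orbs S f)" for f
    unfolding num_cycles_def orbs_def orb_def S_def Setcompr_eq_image ..
  have maps: "(perm_of_partition P \<circ> nextc S) ` S \<subseteq> S"
  proof (rule image_subsetI)
    fix x assume "x \<in> S"
    have "nextc S x \<in> S" using nextc_in[OF fin ne] .
    then have "perm_of_partition P (nextc S x) \<in> S" using perm_maps_inj(1)[OF fin P] by blast
    then show "(perm_of_partition P \<circ> nextc S) x \<in> S" by simp
  qed
  have eq: "(perm_of_partition P \<circ> nextc S) x = (perm_of_partition P \<circ> gamma p) x" if "x \<in> S" for x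
    using gamma_nextc[of x p] that unfolding S_def by simp
  have "orbs S (perm_of_partition P \<circ> nextc S) = orbs S (perm_of_partition P \<circ> gamma p)"
    using orbs_cong[OF maps eq] .
  then show ?thesis using main[OF fin ne P nc] nc_eq by simp
qed

end
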